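(* Let $K,L>0$ and $h>0$. The one-dimensional finite difference operator $F^{1D,e,\delta}$ is Lipschitz continuous with constant \[ C^h=\frac Kh+\frac{2L}{h^2}. \]
   Context: With $A(p,q)=(p^2q)^{1/3}$ (real cube root), $A^\delta(p,q)=\operatorname{sgn}(q)\min(\lvert A(p,q)\rvert,K\lvert p\rvert,L\lvert q\rvert)$ ($\operatorname{sgn}(0)=0$), $A^{\delta,\pm}(p,q)=A^\delta(p^\pm,q^\pm)$ where $x^+=\max(x,0)$, $x^-=\min(x,0)$, the scheme on the uniform grid of spacing $h$ is $-F^{1D,e,\delta}[u]=A^{\delta,+}(\lvert u_x^h\rvert^+,-u_{xx}^h)+A^{\delta,-}(-\lvert u_x^h\rvert^-,-u_{xx}^h)$, with $\lvert u_x^h\rvert^+=\max\{\frac{u(x)-u(x+h)}h,\frac{u(x)-u(x-h)}h,0\}$, $-\lvert u_x^h\rvert^-=\min\{\frac{u(x)-u(x+h)}h,\frac{u(x)-u(x-h)}h,0\}$, $u_{xx}^h=\frac{u(x+h)-2u(x)+u(x-h)}{h^2}$. Writing a finite difference operator as $F^h[u](x)=F^h(x,u(x),u(x)-u(\cdot))$, it is Lipschitz continuous with constant $C$ if $\lvert F^h(x,r,v(\cdot))-F^h(x,s,w(\cdot))\rvert\le C\max(\lvert r-s\rvert,\lVert v-w\rVert_\infty)$ for all grid points $x$. *)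

theory Defs
  imports Complex_Main
begin

(* A(p,q) = (p^2 q)^(1/3), real cube root (root 3 is odd, hence defined and sign-preserving on negatives) *)
definition Acube :: "real \<Rightarrow> real \<Rightarrow> real" where
  "Acube p q = root 3 (p^2 * q)"

definition Adelta :: "real \<Rightarrow> real \<Rightarrow> real \<Rightarrow> real \<Rightarrow> real" where
  "Adelta K L p q = sgn q * min \<bar>Acube p q\<bar> (min (K * \<bar>p\<bar>) (L * \<bar>q\<bar>))"

definition Adelta_plus :: "real \<Rightarrow> real \<Rightarrow> real \<Rightarrow> real \<Rightarrow> real" where
  "Adelta_plus K L p q = Adelta K L (max p 0) (max q 0)"

definition Adelta_minus :: "real \<Rightarrow> real \<Rightarrow> real \<Rightarrow> real \<Rightarrow> real" where
  "Adelta_minus K L p q = Adelta K L (min p 0) (min q 0)"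

(* The scheme F^{1D,e,delta} written in the form F^h(x, r, v(.)), where
   v(y) plays the role of u(x) - u(y) and r the role of u(x).  Then
   (u(x)-u(x+h))/h = v(x+h)/h, (u(x)-u(x-h))/h = v(x-h)/h,
   -u_xx^h = (v(x+h) + v(x-h))/h^2.
   |u_x^h|^+ = max{v(x+h)/h, v(x-h)/h, 0},  -|u_x^h|^- = min{v(x+h)/h, v(x-h)/h, 0}
   and  -F = A^{delta,+}(|u_x|^+, -u_xx) + A^{delta,-}(-|u_x|^-, -u_xx). *)
definition F1D :: "real \<Rightarrow> real \<Rightarrow> real \<Rightarrow> real \<Rightarrow> real \<Rightarrow> (real \<Rightarrow> real) \<Rightarrow> real" where
  "F1D K L h x r v =
     (let a = v (x + h) / h; b = v (x - h) / h;
          mxx = (v (x + h) + v (x - h)) / h^2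
      in - (Adelta_plus K L (max (max a b) 0) mxx
            + Adelta_minus K L (min (min a b) 0) mxx))"

definition F1D_u :: "real \<Rightarrow> real \<Rightarrow> real \<Rightarrow> (real \<Rightarrow> real) \<Rightarrow> real \<Rightarrow> real" where
  "F1D_u K L h u x = F1D K L h x (u x) (\<lambda>y. u x - u y)"

end

theory Submission
  imports Defs
begin

definition G :: "real \<Rightarrow> real \<Rightarrow> real \<Rightarrow> real \<Rightarrow> real" where
  "G K L p q = min (root 3 (p^2*q)) (min (K*p) (L*q))"

lemma root_scale: assumes "0 \<le> t" shows "root 3 (t^3 * y) = t * root 3 y"
  using assms by (simp add: real_root_mult real_root_power_cancel)

lemma G_nonneg: "0 \<le> K \<Longrightarrow> 0 \<le> L \<Longrightarrow> 0 \<le> p \<Longrightarrow> 0 \<le> q \<Longrightarrow> 0 \<le> G K L p q"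
  unfolding G_def by (simp add: real_root_ge_zero)

lemma G_p: assumes K: "0 \<le> K" "0 \<le> L" and p: "0 \<le> p" "p \<le> p'" and q: "0 \<le> q"
  shows "G K L p q \<le> G K L p' q \<and> G K L p' q - G K L p q \<le> K * (p' - p)"
proof
  have "p^2*q \<le> p'^2*q" using p q by (intro mult_right_mono power_mono) auto
  then have r: "root 3 (p^2*q) \<le> root 3 (p'^2*q)" by simp
  have k: "K*p \<le> K*p'" using K p by (simp add: mult_left_mono)
  show "G K L p q \<le> G K L p' q" unfolding G_def by (rule min.mono[OF r min.mono[OF k order_refl]])
next
  show "G K L p' q - G K L p q \<le> K * (p' - p)"
  proof (cases "p = 0")
    case True
    then show ?thesis unfolding G_def using K q by (auto simp: real_root_ge_zero)
  next
    case False
    hence pp: "p > 0" using p by auto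
    define t where "t = p'/p"
    have t1: "t \<ge> 1" using pp p by (simp add: t_def)
    have "p'^2*q \<le> t^3 * (p^2*q)"
    proof -
      have "t^3*(p^2*q) = p'^2*q * t" using pp unfolding t_def by (simp add: field_simps power2_eq_square power3_eq_cube)
      also have "\<dots> \<ge> p'^2*q" using t1 q mult_left_mono[OF t1, of "p'^2*q"] by simp
      finally show ?thesis .
    qed
    hence r: "root 3 (p'^2*q) \<le> t * root 3 (p^2*q)" using t1 root_scale[of t "p^2*q"] real_root_le_mono[of 3] by (metis zero_less_numeral order_trans zero_le_one)
    have k: "K*p' = t*(K*p)" using pp unfolding t_def by simp
    have l: "L*q \<le> t*(L*q)" using t1 K q mult_right_mono[OF t1, of "L*q"] by simp
    have "G K L p' q \<le> min (t * root 3 (p^2*q)) (min (t*(K*p)) (t*(L*q)))"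
      unfolding G_def by (rule min.mono[OF r min.mono[OF eq_refl[OF k] l]])
    also have "\<dots> = t * G K L p q" unfolding G_def using t1 by (simp add: min_mult_distrib_left)
    finally have "G K L p' q \<le> t * G K L p q" .
    moreover have "G K L p q \<le> K*p" unfolding G_def by simp
    moreover have "0 \<le> G K L p q" using G_nonneg K pp q by simp
    ultimately have "G K L p' q - G K L p q \<le> (t-1) * (K*p)"
    proof -
      assume a: "G K L p' q \<le> t * G K L p q" "G K L p q \<le> K*p" "0 \<le> G K L p q"
      have "(t-1) * G K L p q \<le> (t-1) * (K*p)" using a t1 by (intro mult_left_mono) auto
      moreover have "t * G K L p q = G K L p q + (t-1) * G K L p q" by (simp add: algebra_simps)
      ultimately show ?thesis using a by linarith
    qed
    also have "\<dots> = K*(p'-p)" using pp unfolding t_def by (simp add: field_simps)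
    finally show ?thesis .
  qed
qed

lemma G_q: assumes K: "0 \<le> K" "0 \<le> L" and q: "0 \<le> q" "q \<le> q'" and p: "0 \<le> p"
  shows "G K L p q \<le> G K L p q' \<and> G K L p q' - G K L p q \<le> L * (q' - q)"
proof
  have "p^2*q \<le> p^2*q'" using p q by (intro mult_left_mono) auto
  then have r: "root 3 (p^2*q) \<le> root 3 (p^2*q')" by simp
  have k: "L*q \<le> L*q'" using K q by (simp add: mult_left_mono)
  show "G K L p q \<le> G K L p q'" unfolding G_def by (rule min.mono[OF r min.mono[OF order_refl k]])
next
  show "G K L p q' - G K L p q \<le> L * (q' - q)"
  proof (cases "q = 0")
    case True
    then show ?thesis unfolding G_def using K p by (auto simp: real_root_ge_zero)
  next
    case False
    hence qq: "q > 0" using q by auto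
    define t where "t = q'/q"
    have t1: "t \<ge> 1" using qq q by (simp add: t_def)
    have "p^2*q' \<le> t^3 * (p^2*q)"
    proof -
      have "t^3*(p^2*q) = p^2*q' * t^2" using qq unfolding t_def by (simp add: field_simps power2_eq_square power3_eq_cube)
      also have "\<dots> \<ge> p^2*q'" using t1 q p mult_left_mono[of 1 "t^2" "p^2*q'"]
        by (simp add: one_le_power)
      finally show ?thesis .
    qed
    hence r: "root 3 (p^2*q') \<le> t * root 3 (p^2*q)" using t1 root_scale[of t "p^2*q"] real_root_le_mono[of 3] by (metis zero_less_numeral order_trans zero_le_one)
    have k: "L*q' = t*(L*q)" using qq unfolding t_def by simp
    have l: "K*p \<le> t*(K*p)" using t1 K p mult_right_mono[OF t1, of "K*p"] by simp
    have "G K L p q' \<le> min (t * root 3 (p^2*q)) (min (t*(K*p)) (t*(L*q)))"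
      unfolding G_def by (rule min.mono[OF r min.mono[OF l eq_refl[OF k]]])
    also have "\<dots> = t * G K L p q" unfolding G_def using t1 by (simp add: min_mult_distrib_left)
    finally have "G K L p q' \<le> t * G K L p q" .
    moreover have "G K L p q \<le> L*q" unfolding G_def by simp
    moreover have "0 \<le> G K L p q" using G_nonneg K qq p by simp
    ultimately have "G K L p q' - G K L p q \<le> (t-1) * (L*q)"
    proof -
      assume a: "G K L p q' \<le> t * G K L p q" "G K L p q \<le> L*q" "0 \<le> G K L p q"
      have "(t-1) * G K L p q \<le> (t-1) * (L*q)" using a t1 by (intro mult_left_mono) auto
      moreover have "t * G K L p q = G K L p q + (t-1) * G K L p q" by (simp add: algebra_simps)
      ultimately show ?thesis using a by linarith
    qed
    also have "\<dots> = L*(q'-q)" using qq unfolding t_def by (simp add: field_simps)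
    finally show ?thesis .
  qed
qed


lemma G_p_abs: assumes "0 \<le> K" "0 \<le> L" "0 \<le> p" "0 \<le> p'" "0 \<le> q"
  shows "\<bar>G K L p q - G K L p' q\<bar> \<le> K * \<bar>p - p'\<bar>"
proof (cases "p \<le> p'")
  case True thus ?thesis using G_p[of K L p p' q] assms by auto
next
  case False thus ?thesis using G_p[of K L p' p q] assms by auto
qed

lemma G_q_abs: assumes "0 \<le> K" "0 \<le> L" "0 \<le> q" "0 \<le> q'" "0 \<le> p"
  shows "\<bar>G K L p q - G K L p q'\<bar> \<le> L * \<bar>q - q'\<bar>"
proof (cases "q \<le> q'")
  case True thus ?thesis using G_q[of K L q q' p] assms by auto
next
  case False thus ?thesis using G_q[of K L q' q p] assms by auto
qed

lemma G_lip: assumes "0 \<le> K" "0 \<le> L" "0 \<le> p" "0 \<le> p'" "0 \<le> q" "0 \<le> q'"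
  shows "\<bar>G K L p q - G K L p' q'\<bar> \<le> K * \<bar>p - p'\<bar> + L * \<bar>q - q'\<bar>"
  using G_p_abs[of K L p p' q] G_q_abs[of K L q q' p'] assms by linarith

lemma G_bounds: "0 \<le> K \<Longrightarrow> 0 \<le> L \<Longrightarrow> 0 \<le> p \<Longrightarrow> 0 \<le> q \<Longrightarrow> 0 \<le> G K L p q \<and> G K L p q \<le> L * q"
  using G_nonneg[of K L p q] unfolding G_def by simp

lemma Adelta_pos: "0 \<le> p \<Longrightarrow> 0 \<le> q \<Longrightarrow> Adelta K L p q = sgn q * G K L p q"
  unfolding Adelta_def G_def Acube_def by (simp add: real_root_ge_zero)

lemma Adelta_neg: assumes "p \<le> 0" "q \<le> 0" shows "Adelta K L p q = sgn q * G K L (-p) (-q)"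
proof -
  have "\<bar>root 3 (p^2*q)\<bar> = root 3 \<bar>p^2*q\<bar>" by (simp add: real_root_abs)
  also have "\<bar>p^2*q\<bar> = (-p)^2*(-q)" using assms by (simp add: abs_mult)
  finally show ?thesis unfolding Adelta_def G_def Acube_def using assms by simp
qed

definition Phi :: "real \<Rightarrow> real \<Rightarrow> real \<Rightarrow> real \<Rightarrow> real \<Rightarrow> real" where
  "Phi K L P N m = (if m > 0 then G K L P m else if m < 0 then - G K L (-N) (-m) else 0)"

lemma Phi_eq: assumes "0 \<le> P" "N \<le> 0"
  shows "Adelta_plus K L P m + Adelta_minus K L N m = Phi K L P N m"
proof -
  have a: "Adelta_plus K L P m = sgn (max m 0) * G K L P (max m 0)"
    unfolding Adelta_plus_def using assms by (simp add: Adelta_pos)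
  have b: "Adelta_minus K L N m = sgn (min m 0) * G K L (-N) (- min m 0)"
    unfolding Adelta_minus_def using assms by (simp add: Adelta_neg)
  show ?thesis unfolding a b Phi_def by (cases "m > 0"; cases "m < 0") (auto simp: max_def min_def)
qed

lemma Phi_lip: assumes K: "0 \<le> K" "0 \<le> L" and P: "0 \<le> P" "0 \<le> P'" "N \<le> 0" "N' \<le> 0"
  and D: "\<bar>P - P'\<bar> \<le> D" "\<bar>N - N'\<bar> \<le> D"
  shows "\<bar>Phi K L P N m - Phi K L P' N' m'\<bar> \<le> K * D + L * \<bar>m - m'\<bar>"
proof -
  have KD: "K * \<bar>P - P'\<bar> \<le> K * D" "K * \<bar>(-N) - (-N')\<bar> \<le> K * D"
    using D K by (auto intro: mult_left_mono)
  have D0: "0 \<le> K * D" using D K by (auto intro: mult_nonneg_nonneg)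
  have L0: "0 \<le> L * \<bar>m - m'\<bar>" using K by simp
  show ?thesis
  proof (cases "m > 0")
    case m: True
    have b: "0 \<le> G K L P m \<and> G K L P m \<le> L * m" using G_bounds K P m by simp
    show ?thesis
    proof (cases "m' > 0")
      case True thus ?thesis using m G_lip[of K L P P' m m'] K P KD unfolding Phi_def by auto
    next
      case False
      have "\<bar>Phi K L P' N' m'\<bar> \<le> L * (-m')"
        using False G_bounds[of K L "-N'" "-m'"] K P unfolding Phi_def by auto
      moreover have "L * m + L * (-m') = L * \<bar>m - m'\<bar>" using m False by (simp add: algebra_simps)
      ultimately show ?thesis using m b D0 unfolding Phi_def by auto
    qed
  next
    case m0: False
    show ?thesis
    proof (cases "m < 0")
      case m: True
      have b: "0 \<le> G K L (-N) (-m) \<and> G K L (-N) (-m) \<le> L * (-m)" using G_bounds[of K L "-N" "-m"] K P m by simp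
      show ?thesis
      proof (cases "m' < 0")
        case True thus ?thesis using m G_lip[of K L "-N" "-N'" "-m" "-m'"] K P KD unfolding Phi_def
          by (auto simp: abs_minus_commute)
      next
        case False
        have "\<bar>Phi K L P' N' m'\<bar> \<le> L * m'"
          using False G_bounds[of K L "P'" "m'"] K P unfolding Phi_def by auto
        moreover have "L * (-m) + L * m' = L * \<bar>m - m'\<bar>" using m False by (simp add: algebra_simps)
        ultimately show ?thesis using m b D0 unfolding Phi_def by auto
      qed
    next
      case False
      hence "m = 0" using m0 by simp
      have "\<bar>Phi K L P' N' m'\<bar> \<le> L * \<bar>m'\<bar>"
        using G_bounds[of K L "P'" "m'"] G_bounds[of K L "-N'" "-m'"] K P unfolding Phi_def
        by (auto simp: abs_if)
      thus ?thesis using \<open>m = 0\<close> D0 unfolding Phi_def by auto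
    qed
  qed
qed


lemma maxmin_lip1: fixes a b a' b' D :: real assumes "\<bar>a - a'\<bar> \<le> D" "\<bar>b - b'\<bar> \<le> D"
  shows "\<bar>max (max a b) 0 - max (max a' b') 0\<bar> \<le> D"
  using assms by arith
lemma maxmin_lip2: fixes a b a' b' D :: real assumes "\<bar>a - a'\<bar> \<le> D" "\<bar>b - b'\<bar> \<le> D"
  shows "\<bar>min (min a b) 0 - min (min a' b') 0\<bar> \<le> D"
  using assms by arith

theorem mainTheorem10:
  fixes K L h :: real
  assumes "K > 0" and "L > 0" and "h > 0"
  shows "\<forall>(k::int) (r::real) (s::real) (v::real \<Rightarrow> real) (w::real \<Rightarrow> real) (M::real).
           \<bar>r - s\<bar> \<le> M \<longrightarrow> (\<forall>j::int. \<bar>v (h * of_int j) - w (h * of_int j)\<bar> \<le> M) \<longrightarrow>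
           \<bar>F1D K L h (h * of_int k) r v - F1D K L h (h * of_int k) s w\<bar>
             \<le> (K / h + 2 * L / h^2) * M"
proof (intro allI impI)
  fix k :: int and r s :: real and v w :: "real \<Rightarrow> real" and M :: real
  assume rs: "\<bar>r - s\<bar> \<le> M" and J: "\<forall>j::int. \<bar>v (h * of_int j) - w (h * of_int j)\<bar> \<le> M"
  define x where "x = h * of_int k"
  have e1: "h * of_int (k+1) = x + h" unfolding x_def by (simp add: algebra_simps)
  have e2: "h * of_int (k-1) = x - h" unfolding x_def by (simp add: algebra_simps)
  have d1: "\<bar>v (x+h) - w (x+h)\<bar> \<le> M" using J[rule_format, of "k+1"] e1 by simp
  have d2: "\<bar>v (x-h) - w (x-h)\<bar> \<le> M" using J[rule_format, of "k-1"] e2 by simp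
  define a where "a = v (x+h) / h"
  define b where "b = v (x-h) / h"
  define m where "m = (v (x+h) + v (x-h)) / h^2"
  define a' where "a' = w (x+h) / h"
  define b' where "b' = w (x-h) / h"
  define m' where "m' = (w (x+h) + w (x-h)) / h^2"
  have da: "\<bar>a - a'\<bar> \<le> M / h" unfolding a_def a'_def using d1 assms
    by (simp add: diff_divide_distrib[symmetric] divide_right_mono)
  have db: "\<bar>b - b'\<bar> \<le> M / h" unfolding b_def b'_def using d2 assms
    by (simp add: diff_divide_distrib[symmetric] divide_right_mono)
  have dm: "\<bar>m - m'\<bar> \<le> 2 * M / h^2"
  proof -
    have "m - m' = ((v (x+h) - w (x+h)) + (v (x-h) - w (x-h))) / h^2"
      unfolding m_def m'_def by (simp add: diff_divide_distrib[symmetric] algebra_simps)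
    hence "\<bar>m - m'\<bar> = \<bar>(v (x+h) - w (x+h)) + (v (x-h) - w (x-h))\<bar> / h^2" by simp
    also have "\<dots> \<le> 2 * M / h^2" using d1 d2 assms by (intro divide_right_mono) auto
    finally show ?thesis .
  qed
  have F: "F1D K L h x r v = - Phi K L (max (max a b) 0) (min (min a b) 0) m"
    "F1D K L h x s w = - Phi K L (max (max a' b') 0) (min (min a' b') 0) m'"
    unfolding F1D_def Let_def a_def b_def m_def a'_def b'_def m'_def
    by (simp_all add: Phi_eq)
  have pl: "\<bar>Phi K L (max (max a b) 0) (min (min a b) 0) m - Phi K L (max (max a' b') 0) (min (min a' b') 0) m'\<bar> \<le> K * (M/h) + L * \<bar>m - m'\<bar>"
    by (rule Phi_lip) (use assms maxmin_lip1[OF da db] maxmin_lip2[OF da db] in auto)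
  have "\<bar>F1D K L h x r v - F1D K L h x s w\<bar> \<le> K * (M/h) + L * \<bar>m - m'\<bar>"
    unfolding F using pl by linarith
  also have "\<dots> \<le> K * (M/h) + L * (2 * M / h^2)" using mult_left_mono[OF dm, of L] assms by linarith
  also have "\<dots> = (K / h + 2 * L / h^2) * M" by (simp add: field_simps)
  finally show "\<bar>F1D K L h (h * of_int k) r v - F1D K L h (h * of_int k) s w\<bar>
             \<le> (K / h + 2 * L / h^2) * M" unfolding x_def .
qed

end
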